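(* Let $d\ge1$ and let $X\cong\mathbb{P}^d$ be the projective space of effective divisors of degree $d$ on $\mathbb{P}^1$, with the natural action of $G=PGL(2,\mathbb{C})$. For any two nonempty projective linear subspaces $V,W\subseteq X$ there exists $g\in G$ such that $V$ and $gW$ meet properly, i.e. $\dim(V\cap gW)=\max\{-1,\dim V+\dim W-d\}$.
   Context: Dimension $-1$ means empty intersection. *)

theory Defs
  imports "HOL-Computational_Algebra.Polynomial"
begin

text \<open>The projective space X of effective divisors of degree d on P^1 is the
projectivisation of the (d+1)-dimensional complex vector space of binary forms of
degree d.  A binary form sum_k a_k x^k y^(d-k) is encoded by its dehomogenisation,
the univariate polynomial sum_k a_k x^k of degree at most d.\<close>

definition forms :: "nat \<Rightarrow> complex poly set" where
  "forms d = {p. degree p \<le> d}"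

text \<open>Projective linear subspaces of X = nonzero linear subspaces of forms d.\<close>
definition lin_subspace :: "nat \<Rightarrow> complex poly set \<Rightarrow> bool" where
  "lin_subspace d V \<longleftrightarrow> V \<subseteq> forms d \<and> 0 \<in> V \<and>
     (\<forall>p\<in>V. \<forall>q\<in>V. p + q \<in> V) \<and> (\<forall>c. \<forall>p\<in>V. smult c p \<in> V)"

definition nonempty_proj_subspace :: "nat \<Rightarrow> complex poly set \<Rightarrow> bool" where
  "nonempty_proj_subspace d V \<longleftrightarrow> lin_subspace d V \<and> V \<noteq> {0}"

lemma vector_space_smult: "vector_space (smult :: complex \<Rightarrow> complex poly \<Rightarrow> complex poly)"
  by unfold_locales (auto simp: smult_add_right smult_add_left)

text \<open>Projective dimension: vector space dimension minus one (so -1 = empty).\<close>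
definition pdim :: "complex poly set \<Rightarrow> int" where
  "pdim V = int (vector_space.dim (smult :: complex \<Rightarrow> complex poly \<Rightarrow> complex poly) V) - 1"

text \<open>Action of an invertible matrix g = [[a,b],[c,e]] on binary forms of degree d:
f(x,y) is sent to f(a x + b y, c x + e y).  Scalar matrices act by scalars,
so this induces the natural action of PGL(2,C) on X.\<close>
definition act :: "nat \<Rightarrow> complex \<times> complex \<times> complex \<times> complex \<Rightarrow> complex poly \<Rightarrow> complex poly" where
  "act d g p = (case g of (a, b, c, e) \<Rightarrow>
     (\<Sum>k\<le>d. smult (coeff p k) ([:b, a:] ^ k * [:e, c:] ^ (d - k))))"

definition invertible2 :: "complex \<times> complex \<times> complex \<times> complex \<Rightarrow> bool" where
  "invertible2 g = (case g of (a, b, c, e) \<Rightarrow> a * e - b * c \<noteq> 0)"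

end

theory Submission imports Defs begin
interpretation VS: vector_space "smult :: complex \<Rightarrow> complex poly \<Rightarrow> complex poly"
  by (rule vector_space_smult)

lemma lin_sub: "lin_subspace d V \<Longrightarrow> VS.subspace V \<and> V \<subseteq> forms d"
  unfolding lin_subspace_def VS.subspace_def by auto

lemma forms_span: "forms n \<subseteq> VS.span ((\<lambda>k. monom 1 k) ` {..n})"
proof
  fix p assume "p \<in> forms n"
  then have "degree p \<le> n" by (simp add: forms_def)
  then have "p = (\<Sum>i\<le>n. smult (coeff p i) (monom 1 i))"
    using poly_as_sum_of_monoms'[of p n] by (simp add: smult_monom)
  also have "\<dots> \<in> VS.span ((\<lambda>k. monom 1 k) ` {..n})"
    by (intro VS.span_sum VS.span_scale VS.span_base) auto
  finally show "p \<in> VS.span ((\<lambda>k. monom 1 k) ` {..n})" .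
qed

lemma indep_bound: assumes "VS.independent B" "B \<subseteq> forms n"
  shows "finite B \<and> card B \<le> Suc n"
proof -
  have "finite B \<and> card B \<le> card ((\<lambda>k. monom (1::complex) k) ` {..n})"
    using VS.independent_span_bound[OF _ assms(1)] forms_span assms(2) by blast
  moreover have "card ((\<lambda>k. monom (1::complex) k) ` {..n}) \<le> Suc n"
    using card_image_le[of "{..n}" "\<lambda>k. monom (1::complex) k"] by simp
  ultimately show ?thesis by linarith
qed

lemma full_dim: assumes "VS.independent B" "B \<subseteq> forms n" "card B = Suc n"
  shows "forms n \<subseteq> VS.span B"
proof
  fix p assume p: "p \<in> forms n"
  show "p \<in> VS.span B"
  proof (rule ccontr)
    assume np: "p \<notin> VS.span B"
    have fin: "finite B" using indep_bound assms by blast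
    have "VS.independent (insert p B)" by (rule VS.independent_insertI[OF np assms(1)])
    moreover have "insert p B \<subseteq> forms n" using p assms(2) by auto
    ultimately have "card (insert p B) \<le> Suc n" using indep_bound by blast
    moreover have "p \<notin> B" using np VS.span_base by blast
    ultimately show False using fin assms(3) by simp
  qed
qed

lemma basis_fin: assumes "VS.subspace V" "V \<subseteq> forms n"
  obtains B where "B \<subseteq> V" "VS.independent B" "VS.span B = V" "finite B" "card B = VS.dim V"
    "VS.dim V \<le> Suc n"
proof -
  obtain B where B: "B \<subseteq> V" "VS.independent B" "V \<subseteq> VS.span B" "card B = VS.dim V"
    using VS.basis_exists by blast
  have "VS.span B = V" using B assms(1) VS.span_minimal[of B V] by auto
  moreover have "finite B \<and> card B \<le> Suc n" using indep_bound B assms by blast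
  ultimately show ?thesis using that B by auto
qed

lemma dim_direct:
  assumes "VS.subspace A" "VS.subspace C" "A \<subseteq> forms n" "C \<subseteq> forms n" "A \<inter> C \<subseteq> {0}"
  shows "VS.dim (VS.span (A \<union> C)) = VS.dim A + VS.dim C"
proof -
  obtain BA where BA: "BA \<subseteq> A" "VS.independent BA" "VS.span BA = A" "finite BA" "card BA = VS.dim A"
    using basis_fin[OF assms(1,3)] by metis
  obtain BC where BC: "BC \<subseteq> C" "VS.independent BC" "VS.span BC = C" "finite BC" "card BC = VS.dim C"
    using basis_fin[OF assms(2,4)] by metis
  have "0 \<notin> BA" using BA(2) VS.dependent_zero by blast
  then have disj: "BA \<inter> BC = {}" using BA(1) BC(1) assms(5) by blast
  have ind: "VS.independent (BA \<union> BC)"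
  proof (rule VS.independent_if_scalars_zero)
    show "finite (BA \<union> BC)" using BA BC by simp
  next
    fix f x assume s: "(\<Sum>x\<in>BA \<union> BC. smult (f x) x) = 0" and x: "x \<in> BA \<union> BC"
    let ?a = "\<Sum>x\<in>BA. smult (f x) x" and ?c = "\<Sum>x\<in>BC. smult (f x) x"
    have "(\<Sum>x\<in>BA \<union> BC. smult (f x) x) = ?a + ?c"
      by (rule sum.union_disjoint[OF BA(4) BC(4) disj])
    then have ac: "?a + ?c = 0" using s by simp
    have "?a \<in> VS.span BA" by (intro VS.span_sum VS.span_scale VS.span_base)
    then have aA: "?a \<in> A" using BA(3) by simp
    have "?c \<in> VS.span BC" by (intro VS.span_sum VS.span_scale VS.span_base)
    then have cC: "?c \<in> C" using BC(3) by simp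
    have "?a = - ?c" using ac by (simp add: eq_neg_iff_add_eq_0)
    then have "?a \<in> C" using cC VS.subspace_neg[OF assms(2)] by simp
    then have a0: "?a = 0" using aA assms(5) by blast
    then have c0: "?c = 0" using ac by simp
    show "f x = 0"
    proof (cases "x \<in> BA")
      case True
      then show ?thesis using VS.independentD[OF BA(2) BA(4) order_refl a0] by simp
    next
      case False
      then have "x \<in> BC" using x by blast
      then show ?thesis using VS.independentD[OF BC(2) BC(4) order_refl c0] by simp
    qed
  qed
  have sA: "VS.span A = A" using assms(1) by simp
  have sC: "VS.span C = C" using assms(2) by simp
  have "VS.span (BA \<union> BC) = VS.span (A \<union> C)"
    unfolding VS.span_Un by (simp only: BA(3) BC(3) sA sC)
  then have "VS.dim (A \<union> C) = card (BA \<union> BC)"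
    by (rule VS.dim_eq_card[OF _ ind])
  also have "\<dots> = card BA + card BC" using card_Un_disjoint[OF BA(4) BC(4) disj] .
  finally show ?thesis using BA BC by simp
qed

lemma dim_image_inj:
  assumes hom: "module_hom smult smult f" and "VS.subspace V" "V \<subseteq> forms n" "inj_on f V"
  shows "VS.dim (f ` V) = VS.dim V"
proof -
  obtain B where B: "B \<subseteq> V" "VS.independent B" "VS.span B = V" "finite B" "card B = VS.dim V"
    using basis_fin[OF assms(2,3)] by metis
  have ind: "VS.independent (f ` B)"
    using module_hom.independent_injective_image[OF hom B(2)] assms(4) B(3) by simp
  have "VS.span (f ` B) = f ` V" using module_hom.span_image[OF hom, of B] B(3) by simp
  then have "VS.span (f ` B) = VS.span (f ` V)"
    using module_hom.subspace_image[OF hom assms(2)] VS.span_eq_iff by metis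
  then have "VS.dim (f ` V) = card (f ` B)" using VS.dim_eq_card[OF _ ind] by simp
  also have "\<dots> = card B" using card_image inj_on_subset[OF assms(4) B(1)] by blast
  finally show ?thesis using B by simp
qed


lemma module_smult: "module (smult :: complex \<Rightarrow> complex poly \<Rightarrow> complex poly)"
  using vector_space_smult module_iff_vector_space by blast

lemma hom_intro:
  assumes "\<And>x y. f (x + y) = f x + f y" "\<And>c x. f (smult c x) = smult c (f x)"
  shows "module_hom (smult :: complex \<Rightarrow> complex poly \<Rightarrow> complex poly) smult f"
  using assms module_smult by (simp add: module_hom_iff)

definition sh :: "complex \<Rightarrow> complex poly \<Rightarrow> complex poly" where
  "sh r p = pcompose p [:r, 1:]"

definition lowz :: "complex \<Rightarrow> nat \<Rightarrow> complex poly \<Rightarrow> bool" where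
  "lowz r n p \<longleftrightarrow> (\<forall>k<n. coeff (sh r p) k = 0)"

lemma exists_not_root: "(p::complex poly) \<noteq> 0 \<Longrightarrow> \<exists>x. poly p x \<noteq> 0"
  using ex_new_if_finite[OF infinite_UNIV_char_0 poly_roots_finite[of p]] by auto

lemma kernel_lemma:
  fixes p p0 :: "complex poly"
  assumes p0: "p0 \<noteq> 0" and eq: "pderiv p * p0 = p * pderiv p0"
  shows "\<exists>c. p = smult c p0"
proof -
  obtain r0 where r0: "poly p0 r0 \<noteq> 0" using exists_not_root[OF p0] by blast
  define c where "c = poly p r0 / poly p0 r0"
  define q where "q = p - smult c p0"
  have hq: "pderiv q * p0 = q * pderiv p0"
    unfolding q_def using eq by (simp add: pderiv_diff pderiv_smult algebra_simps)
  have q0: "poly q r0 = 0" unfolding q_def c_def using r0 by simp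
  have "q = 0"
  proof (rule ccontr)
    assume qn: "q \<noteq> 0"
    define X where "X = [:- r0, 1:]"
    define m where "m = order r0 q"
    have "m \<noteq> 0" using q0 qn order_root unfolding m_def by blast
    then obtain k where mk: "m = Suc k" by (cases m) auto
    obtain u where u: "q = X ^ m * u" "\<not> X dvd u"
      using order_decomp[OF qn, of r0] unfolding X_def m_def by blast
    have ur: "poly u r0 \<noteq> 0" using u(2) poly_eq_0_iff_dvd unfolding X_def by blast
    have dX: "pderiv X = 1" unfolding X_def by (simp add: pderiv_pCons)
    have dXk: "pderiv (X ^ Suc k) = smult (of_nat (Suc k)) (X ^ k)"
      by (simp only: pderiv_power_Suc dX mult_1_right)
    have "pderiv q = X ^ Suc k * pderiv u + u * (smult (of_nat (Suc k)) (X ^ k))"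
      unfolding u(1) mk by (simp only: pderiv_mult dXk)
    then have "X ^ k * (X * pderiv u * p0 + smult (of_nat (Suc k)) (u * p0)) = X ^ k * (X * u * pderiv p0)"
      using hq unfolding u(1) mk by (simp add: algebra_simps)
    moreover have "X ^ k \<noteq> 0" unfolding X_def by simp
    ultimately have "X * pderiv u * p0 + smult (of_nat (Suc k)) (u * p0) = X * u * pderiv p0"
      using mult_left_cancel[OF \<open>X ^ k \<noteq> 0\<close>] by blast
    then have "poly (X * pderiv u * p0 + smult (of_nat (Suc k)) (u * p0)) r0 = poly (X * u * pderiv p0) r0"
      by simp
    then have "of_nat (Suc k) * (poly u r0 * poly p0 r0) = 0" unfolding X_def by simp
    moreover have "(of_nat (Suc k) :: complex) \<noteq> 0" by (rule of_nat_neq_0)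
    ultimately show False using ur r0 by simp
  qed
  then show ?thesis unfolding q_def by auto
qed

lemma sh_0: "coeff (sh r p) 0 = poly p r"
  unfolding sh_def by (simp add: poly_0_coeff_0[symmetric] poly_pcompose)

lemma low_deriv:
  assumes "\<forall>k<Suc n. coeff P k = 0"
  shows "\<forall>k<n. coeff (pderiv P * A - P * B) k = 0"
proof (intro allI impI)
  fix k assume k: "k < n"
  have "coeff (pderiv P * A) k = 0"
    unfolding coeff_mult using assms k by (auto simp: coeff_pderiv intro!: sum.neutral)
  moreover have "coeff (P * B) k = 0"
    unfolding coeff_mult using assms k by (auto intro!: sum.neutral)
  ultimately show "coeff (pderiv P * A - P * B) k = 0" by simp
qed

lemma gen_finite:
  "VS.subspace V \<Longrightarrow> finite B \<Longrightarrow> card B \<le> n \<Longrightarrow> V \<subseteq> VS.span B \<Longrightarrow>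
    finite {r. \<exists>p\<in>V. p \<noteq> 0 \<and> lowz r n p}"
proof (induction n arbitrary: V B)
  case 0
  then have "B = {}" by simp
  then have "V \<subseteq> {0}" using 0 by simp
  then have "{r. \<exists>p\<in>V. p \<noteq> 0 \<and> lowz r 0 p} = {}" by auto
  then show ?case by (metis finite.emptyI)
next
  case (Suc n)
  show ?case
  proof (cases "V \<subseteq> {0}")
    case True
    then have "{r. \<exists>p\<in>V. p \<noteq> 0 \<and> lowz r (Suc n) p} = {}" by auto
    then show ?thesis by (metis finite.emptyI)
  next
    case False
    then obtain p0 where p0: "p0 \<in> V" "p0 \<noteq> 0" by blast
    have ip0: "VS.independent {p0}" using p0 by simp
    obtain BV where BV: "{p0} \<subseteq> BV" "BV \<subseteq> V" "VS.independent BV" "V \<subseteq> VS.span BV"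
      using VS.maximal_independent_subset_extend[of "{p0}" V] p0 ip0 by blast
    have "finite BV \<and> card BV \<le> card B"
      using VS.independent_span_bound[OF Suc.prems(2) BV(3)] BV(2) Suc.prems(4) by blast
    then have finBV: "finite BV" and cBV: "card BV \<le> Suc n" using Suc.prems(3) by auto
    define D where "D = (\<lambda>p. pderiv p * p0 - p * pderiv p0)"
    have hom: "module_hom smult smult D"
      by (rule hom_intro) (simp_all add: D_def pderiv_add pderiv_smult algebra_simps)
    define B1 where "B1 = D ` (BV - {p0})"
    have finB1: "finite B1" unfolding B1_def using finBV by simp
    have cB1: "card B1 \<le> n"
    proof -
      have "card B1 \<le> card (BV - {p0})" unfolding B1_def by (rule card_image_le) (use finBV in simp)
      also have "\<dots> = card BV - 1" using BV(1) finBV by simp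
      finally show ?thesis using cBV by simp
    qed
    have Dp0: "D p0 = 0" unfolding D_def by simp
    have "D ` V \<subseteq> VS.span B1"
    proof -
      have "D ` V \<subseteq> D ` VS.span BV" using BV(4) by blast
      also have "\<dots> = VS.span (D ` BV)" using module_hom.span_image[OF hom] by simp
      also have "D ` BV \<subseteq> insert 0 B1" unfolding B1_def using Dp0 by blast
      then have "VS.span (D ` BV) \<subseteq> VS.span B1"
        using VS.span_mono[of "D ` BV" "insert 0 B1"] VS.span_insert_0 by simp
      finally show ?thesis .
    qed
    moreover have "VS.subspace (D ` V)" using module_hom.subspace_image[OF hom Suc.prems(1)] .
    ultimately have IH: "finite {r. \<exists>p\<in>D ` V. p \<noteq> 0 \<and> lowz r n p}"
      using Suc.IH finB1 cB1 by blast
    have "{r. \<exists>p\<in>V. p \<noteq> 0 \<and> lowz r (Suc n) p} \<subseteq>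
          {r. \<exists>p\<in>D ` V. p \<noteq> 0 \<and> lowz r n p} \<union> {r. poly p0 r = 0}"
    proof
      fix r assume "r \<in> {r. \<exists>p\<in>V. p \<noteq> 0 \<and> lowz r (Suc n) p}"
      then obtain p where p: "p \<in> V" "p \<noteq> 0" "lowz r (Suc n) p" by blast
      show "r \<in> {r. \<exists>p\<in>D ` V. p \<noteq> 0 \<and> lowz r n p} \<union> {r. poly p0 r = 0}"
      proof (cases "poly p0 r = 0")
        case True then show ?thesis by simp
      next
        case False
        have shD: "sh r (D p) = pderiv (sh r p) * sh r p0 - sh r p * pderiv (sh r p0)"
          unfolding D_def sh_def by (simp add: pcompose_diff pcompose_mult pderiv_pcompose pderiv_pCons)
        have "lowz r n (D p)"
          using low_deriv[of n "sh r p"] p(3) unfolding lowz_def shD by blast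
        show ?thesis
        proof (cases "D p = 0")
          case False
          then show ?thesis using \<open>lowz r n (D p)\<close> p(1) by blast
        next
          case True
          then have "pderiv p * p0 = p * pderiv p0" unfolding D_def by simp
          then obtain c where c: "p = smult c p0" using kernel_lemma p0(2) by blast
          have "coeff (sh r p) 0 = 0" using p(3) unfolding lowz_def by simp
          then have "c * poly p0 r = 0" unfolding sh_0 c by simp
          then have "c = 0" using \<open>poly p0 r \<noteq> 0\<close> by simp
          then show ?thesis using c p(2) by simp
        qed
      qed
    qed
    moreover have "finite {r. poly p0 r = 0}" using poly_roots_finite p0(2) by blast
    ultimately show ?thesis using IH by (meson finite_UnI finite_subset)
  qed
qed

lemma gen_exists:
  assumes "VS.subspace V" "V \<subseteq> forms d"
  shows "\<exists>r. \<forall>p\<in>V. lowz r (VS.dim V) p \<longrightarrow> p = 0"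
proof -
  obtain B where B: "B \<subseteq> V" "VS.independent B" "VS.span B = V" "finite B" "card B = VS.dim V"
    using basis_fin[OF assms] by metis
  have "finite {r. \<exists>p\<in>V. p \<noteq> 0 \<and> lowz r (VS.dim V) p}"
    using gen_finite[OF assms(1) B(4)] B by simp
  then obtain r where "r \<notin> {r. \<exists>p\<in>V. p \<noteq> 0 \<and> lowz r (VS.dim V) p}"
    using ex_new_if_finite[OF infinite_UNIV_char_0] by blast
  then show ?thesis by blast
qed


lemma sh_hom: "module_hom smult smult (sh r)"
  by (rule hom_intro) (simp_all add: sh_def pcompose_add pcompose_smult)

lemma coeff_trunc: "coeff (\<Sum>j<v. monom (c j) j) m = (if m < v then c m else 0)"
  by (simp add: coeff_sum)

lemma echelon:
  assumes V: "VS.subspace V" "V \<subseteq> forms d" and dV: "VS.dim V = v"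
    and gen: "\<forall>p\<in>V. lowz r v p \<longrightarrow> p = 0" and k: "k < v"
  shows "\<exists>P\<in>V. \<forall>j<v. coeff (sh r P) j = (if j = k then 1 else 0)"
proof -
  define L where "L = (\<lambda>p. \<Sum>j<v. monom (coeff (sh r p) j) j)"
  have cL: "coeff (L p) m = (if m < v then coeff (sh r p) m else 0)" for p m
    unfolding L_def by (rule coeff_trunc)
  have hom: "module_hom smult smult L"
    by (rule hom_intro; rule poly_eqI) (simp_all add: cL sh_def pcompose_add pcompose_smult)
  obtain B where B: "B \<subseteq> V" "VS.independent B" "VS.span B = V" "finite B" "card B = VS.dim V"
    using basis_fin[OF V] by metis
  have inj: "inj_on L V"
  proof -
    have "\<forall>x\<in>V. L x = 0 \<longrightarrow> x = 0"
    proof (intro ballI impI)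
      fix x assume x: "x \<in> V" "L x = 0"
      have "lowz r v x" unfolding lowz_def
      proof (intro allI impI)
        fix j assume "j < v"
        then show "coeff (sh r x) j = 0" using cL[of x j] x(2) by simp
      qed
      then show "x = 0" using gen x(1) by blast
    qed
    then show ?thesis using module_hom.inj_on_iff_eq_0[OF hom V(1)] by blast
  qed
  have ind: "VS.independent (L ` B)"
    using module_hom.independent_injective_image[OF hom B(2)] inj B(3) by simp
  have cardLB: "card (L ` B) = Suc (v - 1)"
    using card_image[OF inj_on_subset[OF inj B(1)]] B(5) dV k by simp
  have LBf: "L ` B \<subseteq> forms (v - 1)"
  proof
    fix y assume "y \<in> L ` B"
    then obtain p where "y = L p" by blast
    have "degree (L p) \<le> v - 1"
      by (rule degree_le) (use cL in auto)
    then show "y \<in> forms (v - 1)" using \<open>y = L p\<close> by (simp add: forms_def)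
  qed
  have "forms (v - 1) \<subseteq> VS.span (L ` B)" by (rule full_dim[OF ind LBf cardLB])
  also have "\<dots> = L ` V" using module_hom.span_image[OF hom, of B] B(3) by simp
  finally have "monom 1 k \<in> L ` V" using k by (auto simp: forms_def degree_monom_eq)
  then obtain P where P: "P \<in> V" "L P = monom 1 k" by (metis imageE)
  show ?thesis
  proof (intro bexI[OF _ P(1)] allI impI)
    fix j assume "j < v"
    then show "coeff (sh r P) j = (if j = k then 1 else 0)"
      using cL[of P j] P(2) by auto
  qed
qed

lemma decomp:
  assumes V: "VS.subspace V" and gen: "\<forall>p\<in>V. lowz r v p \<longrightarrow> p = 0"
    and P: "\<And>k. k < v \<Longrightarrow> P k \<in> V"
    and Pc: "\<And>k j. k < v \<Longrightarrow> j < v \<Longrightarrow> coeff (sh r (P k)) j = (if j = k then 1 else 0)"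
    and p: "p \<in> V"
  shows "coeff (sh r p) m = (\<Sum>k<v. coeff (sh r p) k * coeff (sh r (P k)) m)"
proof -
  define q where "q = p - (\<Sum>k<v. smult (coeff (sh r p) k) (P k))"
  have qV: "q \<in> V" unfolding q_def
    by (intro VS.subspace_diff[OF V] p VS.subspace_sum[OF V] VS.subspace_scale[OF V] P) simp
  have shq: "sh r q = sh r p - (\<Sum>k<v. smult (coeff (sh r p) k) (sh r (P k)))"
    unfolding q_def sh_def by (simp add: pcompose_diff pcompose_sum pcompose_smult)
  have "lowz r v q" unfolding lowz_def
  proof (intro allI impI)
    fix j assume j: "j < v"
    have "coeff (sh r q) j = coeff (sh r p) j - (\<Sum>k<v. coeff (sh r p) k * (if j = k then 1 else 0))"
      unfolding shq by (simp add: coeff_sum Pc j)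
    also have "(\<Sum>k<v. coeff (sh r p) k * (if j = k then 1 else 0)) = (\<Sum>k<v. if k = j then coeff (sh r p) k else 0)"
      by (rule sum.cong) auto
    also have "\<dots> = coeff (sh r p) j" using j by (simp add: sum.delta')
    also have "coeff (sh r p) j - coeff (sh r p) j = 0" by simp
    finally show "coeff (sh r q) j = 0" .
  qed
  then have "q = 0" using gen qV by blast
  then have "sh r p = (\<Sum>k<v. smult (coeff (sh r p) k) (sh r (P k)))"
    using shq unfolding q_def by (simp add: sh_def)
  then have "coeff (sh r p) m = coeff (\<Sum>k<v. smult (coeff (sh r p) k) (sh r (P k))) m" by simp
  also have "\<dots> = (\<Sum>k<v. coeff (sh r p) k * coeff (sh r (P k)) m)" by (simp add: coeff_sum)
  finally show ?thesis .
qed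


lemma poly_le: "degree (q::complex poly) \<le> d \<Longrightarrow> poly q y = (\<Sum>k\<le>d. coeff q k * y ^ k)"
proof -
  assume "degree q \<le> d"
  then have "poly q y = poly (\<Sum>i\<le>d. monom (coeff q i) i) y"
    using poly_as_sum_of_monoms'[of q d] by simp
  also have "\<dots> = (\<Sum>k\<le>d. coeff q k * y ^ k)" by (simp add: poly_sum poly_monom)
  finally show ?thesis .
qed

lemma poly_ext_nz:
  fixes p q :: "complex poly"
  assumes "\<And>x. x \<noteq> 0 \<Longrightarrow> poly p x = poly q x"
  shows "p = q"
proof (rule ccontr)
  assume "p \<noteq> q"
  then have "p - q \<noteq> 0" by simp
  then have "finite {x. poly (p - q) x = 0}" by (rule poly_roots_finite)
  moreover have "UNIV - {0} \<subseteq> {x. poly (p - q) x = 0}" using assms by auto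
  ultimately have "finite (UNIV - {0::complex})" by (rule finite_subset[rotated])
  then show False using infinite_UNIV_char_0[where 'a=complex] by simp
qed

lemma term1:
  fixes x t s :: complex
  assumes "x \<noteq> 0" "k \<le> d"
  shows "(t + s * x) ^ k * x ^ (d - k) = x ^ d * (s + t / x) ^ k"
proof -
  have xd: "x ^ d = x ^ (d - k) * x ^ k" using assms(2) by (simp add: power_add[symmetric])
  have "(s + t / x) * x = t + s * x" using assms(1) by (simp add: field_simps)
  then have "(s + t / x) ^ k * x ^ k = (t + s * x) ^ k" by (metis power_mult_distrib)
  then show ?thesis unfolding xd by (simp add: algebra_simps)
qed

lemma term2:
  fixes x t :: complex
  assumes "x \<noteq> 0" "j \<le> d"
  shows "x ^ d * (t / x) ^ j = t ^ j * x ^ (d - j)"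
proof -
  have xd: "x ^ d = x ^ (d - j) * x ^ j" using assms(2) by (simp add: power_add[symmetric])
  have "(t / x) ^ j * x ^ j = t ^ j" using assms(1) by (simp add: power_divide)
  then show ?thesis unfolding xd by (simp add: algebra_simps)
qed

lemma degree_sh: "degree (sh s q) = degree q"
  unfolding sh_def by (simp add: degree_pcompose)

lemma poly_sh: "poly (sh s q) y = poly q (s + y)"
  unfolding sh_def by (simp add: poly_pcompose)

lemma act_shift:
  assumes dq: "degree q \<le> d"
  shows "sh r (act d (s, t - s * r, 1, - r) q) = (\<Sum>j\<le>d. monom (t ^ j * coeff (sh s q) j) (d - j))"
proof (rule poly_ext_nz)
  fix x :: complex assume x: "x \<noteq> 0"
  have "poly (sh r (act d (s, t - s * r, 1, - r) q)) x
      = (\<Sum>k\<le>d. coeff q k * ((t + s * x) ^ k * x ^ (d - k)))"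
  proof -
    have e1: "t - s * r + (r + x) * s = t + s * x" by (simp add: algebra_simps)
    show ?thesis
      by (simp add: poly_sh act_def poly_sum e1 add.commute[of x r])
  qed
  also have "\<dots> = (\<Sum>k\<le>d. x ^ d * (coeff q k * (s + t / x) ^ k))"
  proof (rule sum.cong)
    fix k assume "k \<in> {..d}"
    then have "(t + s * x) ^ k * x ^ (d - k) = x ^ d * (s + t / x) ^ k" using term1[OF x] by simp
    then show "coeff q k * ((t + s * x) ^ k * x ^ (d - k)) = x ^ d * (coeff q k * (s + t / x) ^ k)"
      by (metis mult.left_commute)
  qed simp
  also have "\<dots> = x ^ d * poly q (s + t / x)"
    by (simp add: sum_distrib_left poly_le[OF dq])
  also have "\<dots> = x ^ d * poly (sh s q) (t / x)" by (simp add: poly_sh)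
  also have "\<dots> = (\<Sum>j\<le>d. x ^ d * (coeff (sh s q) j * (t / x) ^ j))"
    using dq by (simp add: poly_le degree_sh sum_distrib_left)
  also have "\<dots> = (\<Sum>j\<le>d. t ^ j * coeff (sh s q) j * x ^ (d - j))"
    by (rule sum.cong) (simp_all add: term2[OF x, symmetric] algebra_simps)
  also have "\<dots> = poly (\<Sum>j\<le>d. monom (t ^ j * coeff (sh s q) j) (d - j)) x"
    by (simp add: poly_sum poly_monom)
  finally show "poly (sh r (act d (s, t - s * r, 1, - r) q)) x =
      poly (\<Sum>j\<le>d. monom (t ^ j * coeff (sh s q) j) (d - j)) x" .
qed

lemma coeff_rev:
  "coeff (\<Sum>j\<le>d. monom (f j) (d - j)) m = (if m \<le> d then f (d - m) else 0)"
proof (cases "m \<le> d")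
  case True
  have "coeff (\<Sum>j\<le>d. monom (f j) (d - j)) m = (\<Sum>j\<le>d. if j = d - m then f j else 0)"
    unfolding coeff_sum by (rule sum.cong) (use True in auto)
  also have "\<dots> = f (d - m)" by (simp add: sum.delta')
  finally show ?thesis using True by simp
next
  case False
  then show ?thesis unfolding coeff_sum by (auto intro!: sum.neutral)
qed

lemma act_hom: "module_hom smult smult (act d g)"
proof -
  obtain a b c e where g: "g = (a, b, c, e)" by (cases g) auto
  show ?thesis
    by (rule hom_intro; rule poly_eqI) (simp_all add: g act_def coeff_sum sum.distrib sum_distrib_left algebra_simps)
qed

lemma act_forms: "act d g q \<in> forms d"
proof -
  obtain a b c e where g: "g = (a, b, c, e)" by (cases g) auto
  have "degree (\<Sum>k\<le>d. smult (coeff q k) ([:b, a:] ^ k * [:e, c:] ^ (d - k))) \<le> d"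
  proof (rule degree_sum_le)
    fix k assume k: "k \<in> {..d}"
    have "degree (smult (coeff q k) ([:b, a:] ^ k * [:e, c:] ^ (d - k)))
        \<le> degree ([:b, a:] ^ k * [:e, c:] ^ (d - k))" by (rule degree_smult_le)
    also have "\<dots> \<le> degree ([:b, a:] ^ k) + degree ([:e, c:] ^ (d - k))" by (rule degree_mult_le)
    also have "\<dots> \<le> degree [:b, a:] * k + degree [:e, c:] * (d - k)"
      by (intro add_mono degree_power_le)
    also have "\<dots> \<le> 1 * k + 1 * (d - k)"
      by (intro add_mono mult_right_mono) (simp_all add: degree_pCons_le)
    also have "\<dots> = d" using k by simp
    finally show "degree (smult (coeff q k) ([:b, a:] ^ k * [:e, c:] ^ (d - k))) \<le> d" .
  qed simp
  then show ?thesis by (simp add: g act_def forms_def)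
qed

lemma act_inj:
  assumes t: "t \<noteq> 0" and dq: "degree q \<le> d" and z: "act d (s, t - s * r, 1, - r) q = 0"
  shows "q = 0"
proof -
  have "sh r (act d (s, t - s * r, 1, - r) q) = 0" using z by (simp add: sh_def)
  then have A: "(\<Sum>j\<le>d. monom (t ^ j * coeff (sh s q) j) (d - j)) = 0"
    using act_shift[OF dq] by simp
  have "coeff (sh s q) j = 0" for j
  proof (cases "j \<le> d")
    case True
    have "coeff (\<Sum>j\<le>d. monom (t ^ j * coeff (sh s q) j) (d - j)) (d - j) = 0" using A by simp
    then have "t ^ j * coeff (sh s q) j = 0" using True by (simp add: coeff_rev)
    then show ?thesis using t by simp
  next
    case False
    then show ?thesis using dq by (simp add: coeff_eq_0 degree_sh)
  qed
  then have "sh s q = 0" by (simp add: poly_eq_iff)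
  then show "q = 0" unfolding sh_def by (rule pcompose_eq_0) simp
qed


lemma ech_choice:
  assumes V: "VS.subspace V" "V \<subseteq> forms d" and dV: "VS.dim V = v"
    and gen: "\<forall>p\<in>V. lowz r v p \<longrightarrow> p = 0"
  obtains P where "\<And>k. k < v \<Longrightarrow> P k \<in> V"
    "\<And>k j. k < v \<Longrightarrow> j < v \<Longrightarrow> coeff (sh r (P k)) j = (if j = k then 1 else 0)"
proof -
  have "\<forall>k. \<exists>P. k < v \<longrightarrow> (P \<in> V \<and> (\<forall>j<v. coeff (sh r P) j = (if j = k then 1 else 0)))"
    using echelon[OF V dV gen] by blast
  then obtain P where "\<forall>k. k < v \<longrightarrow> (P k \<in> V \<and> (\<forall>j<v. coeff (sh r (P k)) j = (if j = k then 1 else 0)))"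
    by metis
  then show ?thesis using that by blast
qed

lemma sum_bound2:
  fixes c :: "nat \<Rightarrow> nat \<Rightarrow> complex"
  assumes "l < w" "m \<le> d"
  shows "cmod (c l m) \<le> (\<Sum>l<w. \<Sum>m\<le>d. cmod (c l m))"
proof -
  have "cmod (c l m) \<le> (\<Sum>m\<le>d. cmod (c l m))"
    by (rule member_le_sum) (use assms in auto)
  also have "\<dots> \<le> (\<Sum>l<w. \<Sum>m\<le>d. cmod (c l m))"
    by (rule member_le_sum[where f="\<lambda>l. \<Sum>m\<le>d. cmod (c l m)"]) (use assms in \<open>auto intro: sum_nonneg\<close>)
  finally show ?thesis .
qed

lemma mainA:
  assumes V: "VS.subspace V" "V \<subseteq> forms d" and W: "VS.subspace W" "W \<subseteq> forms d"
    and dV: "VS.dim V = v" and dW: "VS.dim W = w" and vw: "v + w \<le> Suc d"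
    and gV: "\<forall>p\<in>V. lowz r v p \<longrightarrow> p = 0" and gW: "\<forall>q\<in>W. lowz s w q \<longrightarrow> q = 0"
  shows "\<exists>t. t \<noteq> 0 \<and> V \<inter> act d (s, t - s * r, 1, - r) ` W = {0}"
proof -
  obtain P where P: "\<And>k. k < v \<Longrightarrow> P k \<in> V"
    "\<And>k j. k < v \<Longrightarrow> j < v \<Longrightarrow> coeff (sh r (P k)) j = (if j = k then 1 else 0)"
    using ech_choice[OF V dV gV] by metis
  obtain Q where Q: "\<And>k. k < w \<Longrightarrow> Q k \<in> W"
    "\<And>k j. k < w \<Longrightarrow> j < w \<Longrightarrow> coeff (sh s (Q k)) j = (if j = k then 1 else 0)"
    using ech_choice[OF W dW gW] by metis
  define cV where "cV k m = coeff (sh r (P k)) m" for k m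
  define cW where "cW l m = coeff (sh s (Q l)) m" for l m
  define CV where "CV = (\<Sum>l<v. \<Sum>m\<le>d. cmod (cV l m))"
  define CW where "CW = (\<Sum>l<w. \<Sum>m\<le>d. cmod (cW l m))"
  have CV0: "CV \<ge> 0" unfolding CV_def by (intro sum_nonneg) simp
  have CW0: "CW \<ge> 0" unfolding CW_def by (intro sum_nonneg) simp
  have bV: "cmod (cV k m) \<le> CV" if "k < v" "m \<le> d" for k m
    unfolding CV_def by (rule sum_bound2[OF that])
  have bW: "cmod (cW k m) \<le> CW" if "k < w" "m \<le> d" for k m
    unfolding CW_def by (rule sum_bound2[OF that])
  define eps where "eps = real w * real v * CW * CV"
  have eps0: "eps \<ge> 0" unfolding eps_def using CV0 CW0 by simp
  define t where "t = 1 / (eps + 1)"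
  have t0: "t > 0" unfolding t_def using eps0 by simp
  have t1: "t \<le> 1" unfolding t_def using eps0 by simp
  have teps: "t * eps < 1" unfolding t_def using eps0 by (simp add: field_simps)
  define T where "T = complex_of_real t"
  have T0: "T \<noteq> 0" unfolding T_def using t0 by simp
  have cT: "cmod (T ^ n) = t ^ n" for n unfolding T_def using t0 by (simp add: norm_power)
  have "V \<inter> act d (s, T - s * r, 1, - r) ` W = {0}"
  proof (rule antisym)
    show "{0} \<subseteq> V \<inter> act d (s, T - s * r, 1, - r) ` W"
    proof -
      have "0 \<in> V" using V(1) VS.subspace_0 by blast
      moreover have "0 \<in> W" using W(1) VS.subspace_0 by blast
      moreover have "act d (s, T - s * r, 1, - r) 0 = 0" using module_hom.zero[OF act_hom] by blast
      ultimately show ?thesis by (metis image_eqI insert_subset IntI empty_subsetI)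
    qed
  next
    show "V \<inter> act d (s, T - s * r, 1, - r) ` W \<subseteq> {0}"
    proof
      fix F assume "F \<in> V \<inter> act d (s, T - s * r, 1, - r) ` W"
      then obtain q where FV: "F \<in> V" and q: "q \<in> W" and Fq: "F = act d (s, T - s * r, 1, - r) q"
        by blast
      have dq: "degree q \<le> d" using q W(2) by (auto simp: forms_def)
      define G where "G = sh r F"
      define R where "R = sh s q"
      have cG: "coeff G m = T ^ (d - m) * coeff R (d - m)" if "m \<le> d" for m
        unfolding G_def R_def Fq act_shift[OF dq] coeff_rev using that by simp
      define \<beta> where "\<beta> l = coeff G (d - l)" for l
      define Bs where "Bs = (\<Sum>l<w. cmod (\<beta> l))"
      have Bs0: "Bs \<ge> 0" unfolding Bs_def by (intro sum_nonneg) simp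
      have \<beta>R: "\<beta> l = T ^ l * coeff R l" if "l < w" for l
        using cG[of "d - l"] that vw unfolding \<beta>_def by simp
      have decW: "coeff R m = (\<Sum>l<w. coeff R l * cW l m)" for m
        unfolding R_def cW_def by (rule decomp[OF W(1) gW Q(1) Q(2) q])
      have decV: "coeff G m = (\<Sum>k<v. coeff G k * cV k m)" for m
        unfolding G_def cV_def by (rule decomp[OF V(1) gV P(1) P(2) FV])
      have step1: "cmod (coeff G k) \<le> t * CW * Bs" if k: "k < v" for k
      proof -
        have kd: "k \<le> d" and wk: "w \<le> d - k" using k vw by auto
        have "coeff G k = T ^ (d - k) * coeff R (d - k)" using cG kd by simp
        also have "\<dots> = (\<Sum>l<w. T ^ (d - k) * coeff R l * cW l (d - k))"
          by (subst decW) (simp add: sum_distrib_left mult.assoc)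
        also have "\<dots> = (\<Sum>l<w. T ^ (d - k - l) * \<beta> l * cW l (d - k))"
        proof (rule sum.cong)
          fix l assume "l \<in> {..<w}"
          then have l: "l < w" by simp
          have "T ^ (d - k) = T ^ (d - k - l) * T ^ l" using l wk by (simp add: power_add[symmetric])
          then show "T ^ (d - k) * coeff R l * cW l (d - k) = T ^ (d - k - l) * \<beta> l * cW l (d - k)"
            using \<beta>R[OF l] by (simp add: mult.assoc)
        qed simp
        finally have eq: "coeff G k = (\<Sum>l<w. T ^ (d - k - l) * \<beta> l * cW l (d - k))" .
        have "cmod (coeff G k) \<le> (\<Sum>l<w. cmod (T ^ (d - k - l) * \<beta> l * cW l (d - k)))"
          unfolding eq by (rule norm_sum)
        also have "\<dots> \<le> (\<Sum>l<w. t * cmod (\<beta> l) * CW)"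
        proof (rule sum_mono)
          fix l assume "l \<in> {..<w}"
          then have l: "l < w" by simp
          have "t ^ (d - k - l) \<le> t ^ 1"
            by (rule power_decreasing) (use l wk t0 t1 in auto)
          moreover have "cmod (cW l (d - k)) \<le> CW" using bW l by simp
          ultimately have "t ^ (d - k - l) * cmod (\<beta> l) * cmod (cW l (d - k)) \<le> t * cmod (\<beta> l) * CW"
            using t0 by (intro mult_mono) (auto intro: mult_right_mono)
          then show "cmod (T ^ (d - k - l) * \<beta> l * cW l (d - k)) \<le> t * cmod (\<beta> l) * CW"
            by (simp add: norm_mult cT)
        qed
        also have "\<dots> = t * CW * Bs" unfolding Bs_def by (simp add: sum_distrib_left sum_distrib_right algebra_simps)
        finally show ?thesis .
      qed
      have step2: "cmod (\<beta> l) \<le> real v * (t * CW * Bs) * CV" if l: "l < w" for l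
      proof -
        have "cmod (\<beta> l) = cmod (\<Sum>k<v. coeff G k * cV k (d - l))"
          unfolding \<beta>_def by (subst decV) simp
        also have "\<dots> \<le> (\<Sum>k<v. cmod (coeff G k * cV k (d - l)))" by (rule norm_sum)
        also have "\<dots> \<le> (\<Sum>k<v. (t * CW * Bs) * CV)"
        proof (rule sum_mono)
          fix k assume "k \<in> {..<v}"
          then have k: "k < v" by simp
          show "cmod (coeff G k * cV k (d - l)) \<le> (t * CW * Bs) * CV"
            unfolding norm_mult using step1[OF k] bV[OF k, of "d - l"] t0 CW0 Bs0
            by (intro mult_mono) auto
        qed
        also have "\<dots> = real v * (t * CW * Bs) * CV" by simp
        finally show ?thesis .
      qed
      have "(\<Sum>l<w. cmod (\<beta> l)) \<le> (\<Sum>l<w. real v * (t * CW * Bs) * CV)"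
        by (rule sum_mono) (use step2 in simp)
      then have "Bs \<le> (\<Sum>l<w. real v * (t * CW * Bs) * CV)"
        by (simp only: Bs_def[symmetric])
      also have "\<dots> = (t * eps) * Bs" by (simp add: eps_def algebra_simps)
      finally have "Bs \<le> (t * eps) * Bs" .
      then have "Bs = 0" using teps Bs0 t0 eps0
        by (metis mult_less_cancel_right2 not_le order_antisym)
      then have "lowz r v F"
        unfolding lowz_def using step1 by (simp add: G_def)
      then show "F \<in> {0}" using gV FV by simp
    qed
  qed
  then show ?thesis using T0 by blast
qed


lemma forms_subspace: "VS.subspace (forms d)"
  unfolding VS.subspace_def forms_def
  by (auto intro: order_trans[OF degree_add_le] order_trans[OF degree_smult_le])

lemma dim_zero: "VS.dim {0} = 0"
  using VS.dim_eq_card[of "{}" "{0}"] VS.independent_empty by simp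

lemma pdim_eq: "pdim V = int (VS.dim V) - 1"
  by (simp add: pdim_def)

theorem proposition3p1:
  fixes d :: nat and V W :: "complex poly set"
  assumes "d \<ge> 1"
    and "nonempty_proj_subspace d V"
    and "nonempty_proj_subspace d W"
  shows "\<exists>g. invertible2 g \<and>
           pdim (V \<inter> act d g ` W) = max (-1) (pdim V + pdim W - int d)"
proof -
  have V: "VS.subspace V" "V \<subseteq> forms d" using assms(2) lin_sub unfolding nonempty_proj_subspace_def by blast+
  have W: "VS.subspace W" "W \<subseteq> forms d" using assms(3) lin_sub unfolding nonempty_proj_subspace_def by blast+
  define v where "v = VS.dim V"
  define w where "w = VS.dim W"
  obtain BW where BW: "BW \<subseteq> W" "VS.independent BW" "VS.span BW = W" "finite BW" "card BW = VS.dim W"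
    "VS.dim W \<le> Suc d"
    by (rule basis_fin[OF W])
  have vle: "v \<le> Suc d" unfolding v_def by (rule basis_fin[OF V]) simp
  obtain r where gV: "\<forall>p\<in>V. lowz r v p \<longrightarrow> p = 0" using gen_exists[OF V] unfolding v_def by blast
  have inv: "invertible2 (s, t - s * r, 1, - r)" if "t \<noteq> 0" for s t
    using that by (simp add: invertible2_def algebra_simps)
  have inj: "inj_on (act d (s, t - s * r, 1, - r)) X" if "t \<noteq> 0" "VS.subspace X" "X \<subseteq> forms d" for s t X
  proof -
    have "\<forall>x\<in>X. act d (s, t - s * r, 1, - r) x = 0 \<longrightarrow> x = 0"
      using act_inj[OF that(1)] that(3) by (auto simp: forms_def)
    then show ?thesis using module_hom.inj_on_iff_eq_0[OF act_hom that(2)] by blast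
  qed
  show ?thesis
  proof (cases "v + w \<le> Suc d")
    case True
    obtain s where gW: "\<forall>q\<in>W. lowz s w q \<longrightarrow> q = 0" using gen_exists[OF W] unfolding w_def by blast
    obtain t where t: "t \<noteq> 0" "V \<inter> act d (s, t - s * r, 1, - r) ` W = {0}"
      using mainA[OF V W v_def[symmetric] w_def[symmetric] True gV gW] by blast
    have "pdim (V \<inter> act d (s, t - s * r, 1, - r) ` W) = -1"
      unfolding t(2) pdim_eq dim_zero by simp
    moreover have "pdim V + pdim W - int d \<le> -1"
      unfolding pdim_eq v_def[symmetric] w_def[symmetric] using True by simp
    ultimately show ?thesis using inv[OF t(1)] by (intro exI[of _ "(s, t - s * r, 1, - r)"]) simp
  next
    case False
    define n where "n = Suc d - v"
    have nw: "n \<le> card BW" using False BW(5) unfolding n_def w_def by simp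
    obtain B' where B': "B' \<subseteq> BW" "card B' = n"
      using obtain_subset_with_card_n[OF nw] by blast
    define W' where "W' = VS.span B'"
    have indB': "VS.independent B'" using VS.independent_mono[OF BW(2) B'(1)] .
    have W'sub: "VS.subspace W'" unfolding W'_def by simp
    have W'W: "W' \<subseteq> W" unfolding W'_def using B'(1) BW(1) VS.span_minimal[OF _ W(1)] by blast
    have W'f: "W' \<subseteq> forms d" using W'W W(2) by blast
    have dW': "VS.dim W' = n" unfolding W'_def using VS.dim_span_eq_card_independent[OF indB'] B'(2) by simp
    obtain s where gW': "\<forall>q\<in>W'. lowz s n q \<longrightarrow> q = 0" using gen_exists[OF W'sub W'f] unfolding dW' by blast
    have vn: "v + n \<le> Suc d" unfolding n_def using vle by simp
    obtain t where t: "t \<noteq> 0" "V \<inter> act d (s, t - s * r, 1, - r) ` W' = {0}"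
      using mainA[OF V W'sub W'f v_def[symmetric] dW' vn gV gW'] by blast
    define g where "g = (s, t - s * r, 1::complex, - r)"
    define U where "U = act d g ` W"
    define U' where "U' = act d g ` W'"
    have hom: "module_hom smult smult (act d g)" by (rule act_hom)
    have Usub: "VS.subspace U" unfolding U_def by (rule module_hom.subspace_image[OF hom W(1)])
    have U'sub: "VS.subspace U'" unfolding U'_def by (rule module_hom.subspace_image[OF hom W'sub])
    have Uf: "U \<subseteq> forms d" unfolding U_def using act_forms by blast
    have U'f: "U' \<subseteq> forms d" unfolding U'_def using act_forms by blast
    have U'U: "U' \<subseteq> U" unfolding U_def U'_def using W'W by blast
    have dU: "VS.dim U = w" unfolding U_def g_def w_def
      by (rule dim_image_inj[OF act_hom W inj[OF t(1) W]])
    have dU': "VS.dim U' = n" unfolding U'_def g_def dW'[symmetric]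
      by (rule dim_image_inj[OF act_hom W'sub W'f inj[OF t(1) W'sub W'f]])
    have VU': "V \<inter> U' \<subseteq> {0}" using t(2) unfolding U'_def g_def by simp
    define S where "S = VS.span (V \<union> U')"
    have dS: "VS.dim S = Suc d"
      unfolding S_def dim_direct[OF V(1) U'sub V(2) U'f VU'] dU' v_def[symmetric] n_def using vle by simp
    have Sf: "S \<subseteq> forms d" unfolding S_def
      using V(2) U'f VS.span_minimal[OF _ forms_subspace] by blast
    have Ssub: "VS.subspace S" unfolding S_def by simp
    obtain BS where BS: "BS \<subseteq> S" "VS.independent BS" "VS.span BS = S" "finite BS" "card BS = VS.dim S"
      by (rule basis_fin[OF Ssub Sf])
    have "forms d \<subseteq> VS.span BS"
      by (rule full_dim[OF BS(2)]) (use BS(1) Sf BS(5) dS in auto)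
    then have fS: "forms d \<subseteq> S" using BS(3) by simp
    define K where "K = V \<inter> U"
    have Ksub: "VS.subspace K" unfolding K_def by (rule VS.subspace_inter[OF V(1) Usub])
    have Kf: "K \<subseteq> forms d" unfolding K_def using V(2) by blast
    have KU': "K \<inter> U' \<subseteq> {0}" unfolding K_def using VU' by blast
    have "VS.span (K \<union> U') = U"
    proof (rule antisym)
      have "K \<union> U' \<subseteq> U" unfolding K_def using U'U by blast
      then show "VS.span (K \<union> U') \<subseteq> U" by (rule VS.span_minimal[OF _ Usub])
    next
      show "U \<subseteq> VS.span (K \<union> U')"
      proof
        fix u assume u: "u \<in> U"
        then have "u \<in> S" using Uf fS by blast
        then have "u \<in> {x + y |x y. x \<in> VS.span V \<and> y \<in> VS.span U'}"
          unfolding S_def VS.span_Un .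
        then obtain a b where ab: "u = a + b" "a \<in> VS.span V" "b \<in> VS.span U'"
          by blast
        have sV: "VS.span V = V" using V(1) by simp
        have sU': "VS.span U' = U'" using U'sub by simp
        have aV: "a \<in> V" using ab(2) sV by simp
        have bU': "b \<in> U'" using ab(3) sU' by simp
        have bU: "b \<in> U" using bU' U'U by blast
        have "u - b \<in> U" by (rule VS.subspace_diff[OF Usub u bU])
        moreover have "a = u - b" using ab(1) by simp
        ultimately have "a \<in> U" by simp
        then have "a \<in> K" unfolding K_def using aV by blast
        have "a \<in> VS.span (K \<union> U')" by (rule VS.span_base) (use \<open>a \<in> K\<close> in blast)
        moreover have "b \<in> VS.span (K \<union> U')" by (rule VS.span_base) (use bU' in blast)
        ultimately show "u \<in> VS.span (K \<union> U')"
          using ab(1) VS.span_add by simp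
      qed
    qed
    then have "VS.dim U = VS.dim K + VS.dim U'"
      using dim_direct[OF Ksub U'sub Kf U'f KU'] by simp
    then have dK: "VS.dim K = w - n" using dU dU' by simp
    have "pdim (V \<inter> act d g ` W) = int (w - n) - 1"
      using dK unfolding pdim_eq K_def U_def by simp
    also have "\<dots> = max (-1) (pdim V + pdim W - int d)"
      unfolding pdim_eq v_def[symmetric] w_def[symmetric] n_def using False vle by simp
    finally show ?thesis using inv[OF t(1)] unfolding g_def by blast
  qed
qed

end
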